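(* Let $C$ be a maximal independent set of the Kneser graph $\Gamma$ of flags of type $\{2,3\}$ of $\mathrm{PG}(6,q)$. (i) Every solid $S$ has a subspace $U$ such that for every plane $E$ of $S$: $(E,S)\in C$ if and only if $U\subseteq E$. (ii) For every plane $E$ there is a subspace $U$ containing $E$ such that for every solid $S$ on $E$: $(E,S)\in C$ if and only if $S\subseteq U$.
   Context: Dimensions are projective (planes 2, solids 3). A flag of type $\{2,3\}$ is a pair $(E,S)$ of a plane $E$ and a solid $S$ with $E\subseteq S$; in $\Gamma$ distinct flags $(E,S),(E',S')$ are adjacent iff $E\cap S'=\emptyset$ and $E'\cap S=\emptyset$. Maximal independent means independent and not properly contained in another independent set. *)

theory Defs
  imports "HOL-Analysis.Analysis"
begin

text \<open>PG(n-1,F) is modelled by the vector space F^n with F a finite field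
 (type 'a) and n = CARD('n). Projective subspaces are linear subspaces;
 projective dimension d corresponds to vector dimension d+1; the empty
 projective subspace is the zero subspace.\<close>

definition psubspace :: "('a::field ^ 'n) set \<Rightarrow> bool" where
  "psubspace U \<longleftrightarrow> vec.subspace U"

definition plane :: "('a::field ^ 'n) set \<Rightarrow> bool" where
  "plane E \<longleftrightarrow> vec.subspace E \<and> vec.dim E = 3"

definition solid :: "('a::field ^ 'n) set \<Rightarrow> bool" where
  "solid S \<longleftrightarrow> vec.subspace S \<and> vec.dim S = 4"

definition flag23 :: "('a::field ^ 'n) set \<times> ('a ^ 'n) set \<Rightarrow> bool" where
  "flag23 F \<longleftrightarrow> plane (fst F) \<and> solid (snd F) \<and> fst F \<subseteq> snd F"

text \<open>Projectively disjoint = trivial intersection of the vector subspaces.\<close>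
definition kneser_adj :: "('a::field ^ 'n) set \<times> ('a ^ 'n) set \<Rightarrow> ('a ^ 'n) set \<times> ('a ^ 'n) set \<Rightarrow> bool" where
  "kneser_adj F F' \<longleftrightarrow> flag23 F \<and> flag23 F' \<and> F \<noteq> F'
     \<and> fst F \<inter> snd F' = {0} \<and> fst F' \<inter> snd F = {0}"

definition independent23 :: "(('a::field ^ 'n) set \<times> ('a ^ 'n) set) set \<Rightarrow> bool" where
  "independent23 C \<longleftrightarrow> (\<forall>F\<in>C. flag23 F) \<and> (\<forall>F\<in>C. \<forall>F'\<in>C. \<not> kneser_adj F F')"

definition max_independent23 :: "(('a::field ^ 'n) set \<times> ('a ^ 'n) set) set \<Rightarrow> bool" where
  "max_independent23 C \<longleftrightarrow> independent23 C \<and> \<not> (\<exists>D. independent23 D \<and> C \<subset> D)"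

end

theory Submission
  imports Defs
begin

lemma meet_nz:
  fixes A B X :: "('a::field ^ 'n) set"
  assumes sA: "vec.subspace A" and sB: "vec.subspace B" and sX: "vec.subspace X"
    and "A \<subseteq> X" "B \<subseteq> X" and d: "vec.dim X < vec.dim A + vec.dim B"
  shows "\<exists>x. x \<noteq> 0 \<and> x \<in> A \<and> x \<in> B"
proof -
  have sub: "{x + y |x y. x \<in> A \<and> y \<in> B} \<subseteq> X"
  proof
    fix z assume "z \<in> {x + y |x y. x \<in> A \<and> y \<in> B}"
    then obtain x y where z: "z = x + y" "x \<in> A" "y \<in> B" by blast
    have "x \<in> X" "y \<in> X" using z assms(4,5) by auto
    then show "z \<in> X" using z vec.subspace_add[OF sX] by simp
  qed
  have "vec.dim {x + y |x y. x \<in> A \<and> y \<in> B} \<le> vec.dim X"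
    using vec.dim_subset[OF sub] .
  moreover have "vec.dim {x + y |x y. x \<in> A \<and> y \<in> B} + vec.dim (A \<inter> B) = vec.dim A + vec.dim B"
    using vec.dim_sums_Int[OF sA sB] .
  ultimately have "vec.dim (A \<inter> B) \<noteq> 0" using d by linarith
  then have "\<not> (A \<inter> B \<subseteq> {0})" by (simp only: vec.dim_eq_0 not_False_eq_True)
  then obtain x where "x \<in> A \<inter> B" "x \<notin> {0}" by (meson subsetI)
  then show ?thesis by (intro exI[of _ x]) simp
qed

lemma int_ne0:
  fixes A B :: "('a::field ^ 'n) set"
  assumes "vec.subspace A" "vec.subspace B"
  shows "A \<inter> B \<noteq> {0} \<longleftrightarrow> (\<exists>x. x \<noteq> 0 \<and> x \<in> A \<and> x \<in> B)"
proof
  assume "A \<inter> B \<noteq> {0}"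
  moreover have "0 \<in> A \<inter> B" using vec.subspace_0[OF assms(1)] vec.subspace_0[OF assms(2)] by simp
  ultimately obtain x where "x \<in> A \<inter> B" "x \<noteq> 0" by blast
  then show "\<exists>x. x \<noteq> 0 \<and> x \<in> A \<and> x \<in> B" by blast
next
  assume "\<exists>x. x \<noteq> 0 \<and> x \<in> A \<and> x \<in> B"
  then show "A \<inter> B \<noteq> {0}" by blast
qed

lemma plane_nz:
  fixes E :: "('a::field ^ 'n) set"
  assumes "plane E" shows "E \<noteq> {0}"
proof
  assume "E = {0}"
  then have "vec.dim E = 0" by simp
  then show False using assms unfolding plane_def by simp
qed

lemma L1:
  fixes E S S2 :: "('a::field ^ 'n) set"
  assumes n: "CARD('n) = 7" and S: "solid S" and S2: "solid S2" and E: "plane E" and ES: "E \<subseteq> S"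
  shows "E \<inter> S2 \<noteq> {0} \<longleftrightarrow> (vec.dim (S \<inter> S2) \<le> 1 \<longrightarrow> S \<inter> S2 \<subseteq> E)"
proof -
  have sS: "vec.subspace S" and dS: "vec.dim S = 4" using S unfolding solid_def by auto
  have sS2: "vec.subspace S2" and dS2: "vec.dim S2 = 4" using S2 unfolding solid_def by auto
  have sE: "vec.subspace E" and dE: "vec.dim E = 3" using E unfolding plane_def by auto
  have sW: "vec.subspace (S \<inter> S2)" using vec.subspace_inter[OF sS sS2] .
  have "\<exists>w. w \<noteq> 0 \<and> w \<in> S \<and> w \<in> S2"
  proof (rule meet_nz[OF sS sS2 vec.subspace_UNIV])
    have "vec.dim (UNIV::('a ^ 'n) set) = 7" using vec_dim_card[where ?'a='a and ?'n='n] n by simp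
    then show "vec.dim (UNIV::('a ^ 'n) set) < vec.dim S + vec.dim S2" using dS dS2 by linarith
  qed auto
  then obtain w where w: "w \<noteq> 0" "w \<in> S" "w \<in> S2" by blast
  show ?thesis
  proof (cases "vec.dim (S \<inter> S2) \<le> 1")
    case False
    have "\<exists>x. x \<noteq> 0 \<and> x \<in> E \<and> x \<in> S \<inter> S2"
      by (rule meet_nz[OF sE sW sS]) (use ES False dS dE in auto)
    then have "E \<inter> S2 \<noteq> {0}" by blast
    then show ?thesis using False by simp
  next
    case True
    show ?thesis
    proof
      assume "E \<inter> S2 \<noteq> {0}"
      then obtain x where x: "x \<noteq> 0" "x \<in> E" "x \<in> S2" using int_ne0[OF sE sS2] by blast
      have xW: "x \<in> S \<inter> S2" using x ES by auto
      have sp: "vec.span {x} \<subseteq> S \<inter> S2" by (rule vec.span_minimal) (use xW sW in auto)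
      have "vec.dim (vec.span {x}) = 1" using x by simp
      then have "vec.span {x} = S \<inter> S2"
        using vec.subspace_dim_equal[OF vec.subspace_span sW sp] True by simp
      moreover have "vec.span {x} \<subseteq> E" by (rule vec.span_minimal) (use x sE in auto)
      ultimately show "vec.dim (S \<inter> S2) \<le> 1 \<longrightarrow> S \<inter> S2 \<subseteq> E" by simp
    next
      assume "vec.dim (S \<inter> S2) \<le> 1 \<longrightarrow> S \<inter> S2 \<subseteq> E"
      then have "w \<in> E" using True w by auto
      then show "E \<inter> S2 \<noteq> {0}" using w by auto
    qed
  qed
qed

lemma L2:
  fixes E S E2 S2 :: "('a::field ^ 'n) set"
  assumes E: "plane E" and S: "solid S" and ES: "E \<subseteq> S" and E2: "plane E2"
    and E2S2: "E2 \<subseteq> S2" and disj: "E \<inter> S2 = {0}"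
  shows "E2 \<inter> S \<noteq> {0} \<longleftrightarrow> S \<subseteq> vec.span (E \<union> E2)"
proof -
  have sS: "vec.subspace S" and dS: "vec.dim S = 4" using S unfolding solid_def by auto
  have sE: "vec.subspace E" and dE: "vec.dim E = 3" using E unfolding plane_def by auto
  have sE2: "vec.subspace E2" and dE2: "vec.dim E2 = 3" using E2 unfolding plane_def by auto
  have d0: "E \<inter> E2 = {0}" using disj E2S2 sE sE2 vec.subspace_0 by blast
  have spE: "vec.span E = E" using sE vec.span_eq_iff by blast
  have spE2: "vec.span E2 = E2" using sE2 vec.span_eq_iff by blast
  have "vec.span (E \<union> E2) = {x + y |x y. x \<in> E \<and> y \<in> E2}"
    using vec.span_Un[of E E2] spE spE2 by simp
  moreover have "vec.dim {x + y |x y. x \<in> E \<and> y \<in> E2} + vec.dim (E \<inter> E2) = 6"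
    using vec.dim_sums_Int[OF sE sE2] dE dE2 by simp
  ultimately have dU: "vec.dim (vec.span (E \<union> E2)) = 6" using d0 by simp
  have sU: "vec.subspace (vec.span (E \<union> E2))" by (rule vec.subspace_span)
  show ?thesis
  proof
    assume "E2 \<inter> S \<noteq> {0}"
    then obtain x where x: "x \<noteq> 0" "x \<in> E2" "x \<in> S" using int_ne0[OF sE2 sS] by blast
    define M where "M = S \<inter> vec.span (E \<union> E2)"
    have sM: "vec.subspace M" unfolding M_def using vec.subspace_inter[OF sS sU] .
    have EM: "E \<subseteq> M" unfolding M_def using ES vec.span_superset by blast
    have xM: "x \<in> M" unfolding M_def using x vec.span_superset by blast
    have xE: "x \<notin> E" using x d0 by blast
    have "vec.span E \<subset> vec.span M" using EM xM xE spE sM vec.span_eq_iff by blast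
    then have "vec.dim E < vec.dim M" by (rule vec.dim_psubset)
    then have "vec.dim S \<le> vec.dim M" using dE dS by simp
    then have "M = S" using vec.subspace_dim_equal[OF sM sS] M_def by blast
    then show "S \<subseteq> vec.span (E \<union> E2)" unfolding M_def by blast
  next
    assume "S \<subseteq> vec.span (E \<union> E2)"
    have "\<exists>x. x \<noteq> 0 \<and> x \<in> E2 \<and> x \<in> S"
      by (rule meet_nz[OF sE2 sS sU]) (use \<open>S \<subseteq> _\<close> dU dS dE2 vec.span_superset[of "E \<union> E2"] in auto)
    then show "E2 \<inter> S \<noteq> {0}" by blast
  qed
qed

lemma charC:
  fixes C :: "(('a::field ^ 'n) set \<times> ('a ^ 'n) set) set"
  assumes M: "max_independent23 C" and F: "flag23 (E, S)"
  shows "(E, S) \<in> C \<longleftrightarrow> (\<forall>E2 S2. (E2, S2) \<in> C \<longrightarrow> E2 \<inter> S = {0} \<longrightarrow> E \<inter> S2 \<noteq> {0})"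
proof -
  have ind: "independent23 C" and nm: "\<not> (\<exists>D. independent23 D \<and> C \<subset> D)"
    using M unfolding max_independent23_def by auto
  have fl: "\<And>G. G \<in> C \<Longrightarrow> flag23 G" using ind unfolding independent23_def by auto
  have na: "\<And>G G'. G \<in> C \<Longrightarrow> G' \<in> C \<Longrightarrow> \<not> kneser_adj G G'"
    using ind unfolding independent23_def by auto
  have pE: "plane E" and ES: "E \<subseteq> S" using F unfolding flag23_def by auto
  have Enz: "E \<noteq> {0}" using plane_nz[OF pE] .
  show ?thesis
  proof
    assume inC: "(E, S) \<in> C"
    show "\<forall>E2 S2. (E2, S2) \<in> C \<longrightarrow> E2 \<inter> S = {0} \<longrightarrow> E \<inter> S2 \<noteq> {0}"
    proof (intro allI impI notI)
      fix E2 S2 assume in2: "(E2, S2) \<in> C" and d1: "E2 \<inter> S = {0}" and d2: "E \<inter> S2 = {0}"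
      have ne: "(E, S) \<noteq> (E2, S2)"
      proof
        assume "(E, S) = (E2, S2)"
        then have "E2 = E" by simp
        then have "E \<inter> S = {0}" using d1 by simp
        then have "E = {0}" using ES by (simp add: Int_absorb2)
        then show False using Enz by simp
      qed
      have "kneser_adj (E, S) (E2, S2)"
        unfolding kneser_adj_def using fl[OF inC] fl[OF in2] ne d1 d2 by simp
      then show False using na[OF inC in2] by simp
    qed
  next
    assume H: "\<forall>E2 S2. (E2, S2) \<in> C \<longrightarrow> E2 \<inter> S = {0} \<longrightarrow> E \<inter> S2 \<noteq> {0}"
    show "(E, S) \<in> C"
    proof (rule ccontr)
      assume nin: "(E, S) \<notin> C"
      have "independent23 (insert (E, S) C)"
        unfolding independent23_def
      proof (intro conjI ballI)
        fix G assume "G \<in> insert (E, S) C"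
        then show "flag23 G" using F fl by (metis insertE)
      next
        fix G G' assume G: "G \<in> insert (E, S) C" and G': "G' \<in> insert (E, S) C"
        show "\<not> kneser_adj G G'"
        proof (cases "G = (E, S)")
          case True
          show ?thesis
          proof (cases "G' = (E, S)")
            case True
            then show ?thesis using \<open>G = (E, S)\<close> unfolding kneser_adj_def by simp
          next
            case False
            then have "G' \<in> C" using G' by simp
            obtain E2 S2 where g2: "G' = (E2, S2)" by (cases G')
            have "(E2, S2) \<in> C" using \<open>G' \<in> C\<close> g2 by simp
            then show ?thesis using H True g2 unfolding kneser_adj_def by auto
          qed
        next
          case False
          then have GC: "G \<in> C" using G by simp
          show ?thesis
          proof (cases "G' = (E, S)")
            case True
            obtain E2 S2 where g2: "G = (E2, S2)" by (cases G)
            have "(E2, S2) \<in> C" using GC g2 by simp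
            then show ?thesis using H True g2 unfolding kneser_adj_def by auto
          next
            case False
            then have "G' \<in> C" using G' by simp
            then show ?thesis using na GC by simp
          qed
        qed
      qed
      moreover have "C \<subset> insert (E, S) C" using nin by auto
      ultimately show False using nm by auto
    qed
  qed
qed

theorem lemma6p1:
  fixes C :: "(('a::{field,finite} ^ 'n) set \<times> ('a ^ 'n) set) set"
  assumes "CARD('n) = 7"
    and "max_independent23 C"
  shows "(\<forall>S. solid S \<longrightarrow> (\<exists>U. psubspace U \<and> U \<subseteq> S \<and>
            (\<forall>E. plane E \<and> E \<subseteq> S \<longrightarrow> ((E, S) \<in> C \<longleftrightarrow> U \<subseteq> E))))
       \<and> (\<forall>E. plane E \<longrightarrow> (\<exists>U. psubspace U \<and> E \<subseteq> U \<and>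
            (\<forall>S. solid S \<and> E \<subseteq> S \<longrightarrow> ((E, S) \<in> C \<longleftrightarrow> S \<subseteq> U))))"
proof -
  have fl: "\<And>G. G \<in> C \<Longrightarrow> flag23 G"
    using assms(2) unfolding max_independent23_def independent23_def by auto
  have P1: "\<exists>U. psubspace U \<and> U \<subseteq> S \<and>
            (\<forall>E. plane E \<and> E \<subseteq> S \<longrightarrow> ((E, S) \<in> C \<longleftrightarrow> U \<subseteq> E))" if sol: "solid S" for S
  proof -
    have sS: "vec.subspace S" using sol unfolding solid_def by simp
    define Ws where "Ws = {S \<inter> S2 | S2. \<exists>E2. (E2, S2) \<in> C \<and> E2 \<inter> S = {0} \<and> vec.dim (S \<inter> S2) \<le> 1}"
    define U where "U = vec.span (\<Union>Ws)"
    have WS: "\<Union>Ws \<subseteq> S" unfolding Ws_def by auto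
    have ps: "psubspace U" unfolding psubspace_def U_def by (rule vec.subspace_span)
    have US: "U \<subseteq> S" unfolding U_def by (rule vec.span_minimal[OF WS sS])
    have main: "(E, S) \<in> C \<longleftrightarrow> U \<subseteq> E" if pl: "plane E" and ES: "E \<subseteq> S" for E
    proof -
      have sE: "vec.subspace E" using pl unfolding plane_def by simp
      have f: "flag23 (E, S)" unfolding flag23_def using pl sol ES by simp
      have "(E, S) \<in> C \<longleftrightarrow> (\<forall>E2 S2. (E2, S2) \<in> C \<longrightarrow> E2 \<inter> S = {0} \<longrightarrow> E \<inter> S2 \<noteq> {0})"
        by (rule charC[OF assms(2) f])
      also have "\<dots> \<longleftrightarrow> (\<forall>E2 S2. (E2, S2) \<in> C \<longrightarrow> E2 \<inter> S = {0} \<longrightarrow>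
                   (vec.dim (S \<inter> S2) \<le> 1 \<longrightarrow> S \<inter> S2 \<subseteq> E))"
      proof -
        have "E \<inter> S2 \<noteq> {0} \<longleftrightarrow> (vec.dim (S \<inter> S2) \<le> 1 \<longrightarrow> S \<inter> S2 \<subseteq> E)"
          if "(E2, S2) \<in> C" for E2 S2
        proof -
          have "solid S2" using fl[OF that] unfolding flag23_def by simp
          then show ?thesis by (rule L1[OF assms(1) sol _ pl ES])
        qed
        then show ?thesis by (simp cong: imp_cong)
      qed
      also have "\<dots> \<longleftrightarrow> \<Union>Ws \<subseteq> E"
      proof
        assume A: "\<forall>E2 S2. (E2, S2) \<in> C \<longrightarrow> E2 \<inter> S = {0} \<longrightarrow>
                   (vec.dim (S \<inter> S2) \<le> 1 \<longrightarrow> S \<inter> S2 \<subseteq> E)"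
        show "\<Union>Ws \<subseteq> E"
        proof
          fix z assume "z \<in> \<Union>Ws"
          then obtain W where W: "W \<in> Ws" "z \<in> W" by (rule UnionE)
          then obtain S2 E2 where w: "W = S \<inter> S2" "(E2, S2) \<in> C" "E2 \<inter> S = {0}" "vec.dim (S \<inter> S2) \<le> 1"
            unfolding Ws_def by blast
          have "S \<inter> S2 \<subseteq> E" using A[rule_format, OF w(2) w(3) w(4)] .
          then show "z \<in> E" using W(2) w(1) by (simp add: subsetD)
        qed
      next
        assume B: "\<Union>Ws \<subseteq> E"
        show "\<forall>E2 S2. (E2, S2) \<in> C \<longrightarrow> E2 \<inter> S = {0} \<longrightarrow>
                   (vec.dim (S \<inter> S2) \<le> 1 \<longrightarrow> S \<inter> S2 \<subseteq> E)"
        proof (intro allI impI)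
          fix E2 S2 assume c: "(E2, S2) \<in> C" "E2 \<inter> S = {0}" "vec.dim (S \<inter> S2) \<le> 1"
          have "\<exists>S2'. S \<inter> S2 = S \<inter> S2' \<and> (\<exists>E2'. (E2', S2') \<in> C \<and> E2' \<inter> S = {0} \<and> vec.dim (S \<inter> S2') \<le> 1)"
            using c by blast
          then have "S \<inter> S2 \<in> Ws" unfolding Ws_def by simp
          then show "S \<inter> S2 \<subseteq> E" using B by (rule subset_trans[OF Union_upper])
        qed
      qed
      also have "\<dots> \<longleftrightarrow> U \<subseteq> E"
      proof
        assume "\<Union>Ws \<subseteq> E" then show "U \<subseteq> E" unfolding U_def by (rule vec.span_minimal[OF _ sE])
      next
        assume "U \<subseteq> E" then show "\<Union>Ws \<subseteq> E" unfolding U_def using vec.span_superset[of "\<Union>Ws"] by blast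
      qed
      finally show ?thesis .
    qed
    show ?thesis using ps US main by blast
  qed
  have P2: "\<exists>U. psubspace U \<and> E \<subseteq> U \<and>
            (\<forall>S. solid S \<and> E \<subseteq> S \<longrightarrow> ((E, S) \<in> C \<longleftrightarrow> S \<subseteq> U))" if pl: "plane E" for E
  proof -
    define U where "U = {x. \<forall>E2 S2. (E2, S2) \<in> C \<longrightarrow> E \<inter> S2 = {0} \<longrightarrow> x \<in> vec.span (E \<union> E2)}"
    have mem: "x \<in> U \<longleftrightarrow> (\<forall>E2 S2. (E2, S2) \<in> C \<longrightarrow> E \<inter> S2 = {0} \<longrightarrow> x \<in> vec.span (E \<union> E2))" for x
      unfolding U_def by simp
    have "vec.subspace U" unfolding vec.subspace_def
    proof (intro conjI ballI allI)
      show "0 \<in> U" unfolding mem by (simp add: vec.span_zero)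
    next
      fix x y assume x: "x \<in> U" and y: "y \<in> U"
      show "x + y \<in> U" unfolding mem
      proof (intro allI impI)
        fix E2 S2 assume a: "(E2, S2) \<in> C" "E \<inter> S2 = {0}"
        have "x \<in> vec.span (E \<union> E2)" using x a unfolding mem by simp
        moreover have "y \<in> vec.span (E \<union> E2)" using y a unfolding mem by simp
        ultimately show "x + y \<in> vec.span (E \<union> E2)" by (rule vec.span_add)
      qed
    next
      fix c x assume x: "x \<in> U"
      show "c *s x \<in> U" unfolding mem
      proof (intro allI impI)
        fix E2 S2 assume a: "(E2, S2) \<in> C" "E \<inter> S2 = {0}"
        have "x \<in> vec.span (E \<union> E2)" using x a unfolding mem by simp
        then show "c *s x \<in> vec.span (E \<union> E2)" by (rule vec.span_scale)
      qed
    qed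
    then have ps: "psubspace U" unfolding psubspace_def .
    have EU: "E \<subseteq> U"
    proof
      fix x assume x: "x \<in> E"
      show "x \<in> U" unfolding mem
      proof (intro allI impI)
        fix E2 S2
        show "x \<in> vec.span (E \<union> E2)" by (rule vec.span_base) (use x in simp)
      qed
    qed
    have main: "(E, S) \<in> C \<longleftrightarrow> S \<subseteq> U" if sol: "solid S" and ES: "E \<subseteq> S" for S
    proof -
      have f: "flag23 (E, S)" unfolding flag23_def using pl sol ES by simp
      have "(E, S) \<in> C \<longleftrightarrow> (\<forall>E2 S2. (E2, S2) \<in> C \<longrightarrow> E2 \<inter> S = {0} \<longrightarrow> E \<inter> S2 \<noteq> {0})"
        by (rule charC[OF assms(2) f])
      also have "\<dots> \<longleftrightarrow> (\<forall>E2 S2. (E2, S2) \<in> C \<longrightarrow> E \<inter> S2 = {0} \<longrightarrow> S \<subseteq> vec.span (E \<union> E2))"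
      proof -
        have "(E2 \<inter> S = {0} \<longrightarrow> E \<inter> S2 \<noteq> {0}) \<longleftrightarrow> (E \<inter> S2 = {0} \<longrightarrow> S \<subseteq> vec.span (E \<union> E2))"
          if "(E2, S2) \<in> C" for E2 S2
        proof -
          have "plane E2" "E2 \<subseteq> S2" using fl[OF that] unfolding flag23_def by auto
          then show ?thesis
          proof (cases "E \<inter> S2 = {0}")
            case True
            then have "E2 \<inter> S \<noteq> {0} \<longleftrightarrow> S \<subseteq> vec.span (E \<union> E2)"
              by (rule L2[OF pl sol ES \<open>plane E2\<close> \<open>E2 \<subseteq> S2\<close>])
            then show ?thesis using True by simp
          next
            case False
            then show ?thesis by simp
          qed
        qed
        then show ?thesis by (simp cong: imp_cong)
      qed
      also have "\<dots> \<longleftrightarrow> S \<subseteq> U"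
      proof
        assume A: "\<forall>E2 S2. (E2, S2) \<in> C \<longrightarrow> E \<inter> S2 = {0} \<longrightarrow> S \<subseteq> vec.span (E \<union> E2)"
        show "S \<subseteq> U"
        proof
          fix x assume x: "x \<in> S"
          show "x \<in> U" unfolding mem
          proof (intro allI impI)
            fix E2 S2 assume c: "(E2, S2) \<in> C" "E \<inter> S2 = {0}"
            show "x \<in> vec.span (E \<union> E2)" by (rule subsetD[OF A[rule_format, OF c] x])
          qed
        qed
      next
        assume B: "S \<subseteq> U"
        show "\<forall>E2 S2. (E2, S2) \<in> C \<longrightarrow> E \<inter> S2 = {0} \<longrightarrow> S \<subseteq> vec.span (E \<union> E2)"
        proof (intro allI impI subsetI)
          fix E2 S2 x assume c: "(E2, S2) \<in> C" "E \<inter> S2 = {0}" and x: "x \<in> S"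
          have "x \<in> U" by (rule subsetD[OF B x])
          then show "x \<in> vec.span (E \<union> E2)" unfolding mem using c by simp
        qed
      qed
      finally show ?thesis .
    qed
    show ?thesis using ps EU main by blast
  qed
  show ?thesis using P1 P2 by blast
qed

end
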